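(* Let $0<\epsilon<\pi$. For $i\in\mathbb{Z}_{>0}$ odd, the inclusion $\Delta_{\mathbb{CP}^n}\times\{i\pi+\epsilon\}\to Z_i\cap Z_{i+1}^c$ is a homotopy equivalence. For $i\in\mathbb{Z}_{>0}$ even, the inclusion $\bigcup_{x\in\mathbb{CP}^n}\{x\}\times D_x\times\{i\pi+\epsilon\}\to Z_i\cap Z_{i+1}^c$ is a homotopy equivalence.
   Context: $\mathbb{CP}^n$ has the Fubini–Study metric (Kähler form $\sum2\sqrt{-1}h_{ij}dz_i\wedge d\bar z_j$, $h_{ij}=\frac{(1+\sum_k|z_k|^2)\delta_{ij}-\bar z_iz_j}{(1+\sum_k|z_k|^2)^2}$), geodesic distance $\mathrm{dist}$, diameter $\pi$. $\Delta_{\mathbb{CP}^n}$ is the diagonal. For $x\in\mathbb{CP}^n$, $D_x=\{y\mid\mathrm{dist}(x,y)=\pi\}$. For $i>0$, $Z_i=\{(x,y,t)\mid\mathrm{dist}(x,y)<t-(i-1)\pi\}$ if $i$ odd and $Z_i=\{(x,y,t)\mid\mathrm{dist}(x,D_y)<t-(i-1)\pi\}$ if $i$ even; $Z^c$ denotes the complement in $\mathbb{CP}^n\times\mathbb{CP}^n\times\mathbb{R}$. *)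

theory Defs
  imports "HOL-Analysis.Analysis"
begin

text \<open>Model of CP^n: a point [u] (u a unit vector in C^(n+1), index type 'm with
  CARD('m) = n+1) is represented by the rank-one Hermitian projector u u^*, a point
  of the Euclidean space complex^'m^'m; CP^n carries the subspace topology.\<close>

definition proj_line :: "complex^'m \<Rightarrow> complex^'m^'m" where
  "proj_line u = (\<chi> i j. u$i * cnj (u$j))"

definition CP :: "(complex^'m^'m) set" where
  "CP = {P. \<exists>u::complex^'m. norm u = 1 \<and> P = proj_line u}"

text \<open>Geodesic distance of the Fubini-Study metric normalised to diameter pi:
  dist([u],[v]) = 2 arccos |<u,v>|, and trace(P Q) = |<u,v>|^2.\<close>

definition fs_dist :: "complex^'m^'m \<Rightarrow> complex^'m^'m \<Rightarrow> real" where
  "fs_dist P Q = 2 * arccos (sqrt (Re (trace (P ** Q))))"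

definition antipodal :: "complex^'m^'m \<Rightarrow> (complex^'m^'m) set" where
  "antipodal x = {y \<in> CP. fs_dist x y = pi}"

definition fs_setdist :: "complex^'m^'m \<Rightarrow> (complex^'m^'m) set \<Rightarrow> real" where
  "fs_setdist x S = Inf (fs_dist x ` S)"

definition Zset :: "nat \<Rightarrow> ((complex^'m^'m) \<times> (complex^'m^'m) \<times> real) set" where
  "Zset i = {(x, y, t). x \<in> CP \<and> y \<in> CP \<and>
     (if odd i then fs_dist x y < t - (real i - 1) * pi
      else fs_setdist x (antipodal y) < t - (real i - 1) * pi)}"

definition homotopy_equivalence_map ::
  "'a topology \<Rightarrow> 'b topology \<Rightarrow> ('a \<Rightarrow> 'b) \<Rightarrow> bool" where
  "homotopy_equivalence_map X Y f \<longleftrightarrow> continuous_map X Y f \<and>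
     (\<exists>g. continuous_map Y X g \<and>
          homotopic_with (\<lambda>h. True) X X (g \<circ> f) id \<and>
          homotopic_with (\<lambda>h. True) Y Y (f \<circ> g) id)"

end

theory Submission
  imports Defs
begin


definition ip :: "complex^'m \<Rightarrow> complex^'m \<Rightarrow> complex" where
  "ip x y = (\<Sum>k\<in>UNIV. x$k * cnj (y$k))"

lemma ip_add_left: "ip (x + y) z = ip x z + ip y z"
  by (simp add: ip_def distrib_right sum.distrib)
lemma ip_diff_left: "ip (x - y) z = ip x z - ip y z"
  by (simp add: ip_def left_diff_distrib sum_subtractf)
lemma ip_add_right: "ip x (y + z) = ip x y + ip x z"
  by (simp add: ip_def distrib_left sum.distrib)
lemma ip_diff_right: "ip x (y - z) = ip x y - ip x z"
  by (simp add: ip_def right_diff_distrib sum_subtractf)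
lemma ip_smult_left: "ip (c *s x) z = c * ip x z"
  by (simp add: ip_def sum_distrib_left mult.assoc)
lemma ip_smult_right: "ip x (c *s z) = cnj c * ip x z"
  by (simp add: ip_def sum_distrib_left algebra_simps)
lemma ip_scaleR_left: "ip (c *\<^sub>R x) z = of_real c * ip x z"
  unfolding ip_def vector_scaleR_component by (simp add: sum_distrib_left mult.assoc scaleR_conv_of_real)
lemma ip_scaleR_right: "ip x (c *\<^sub>R z) = of_real c * ip x z"
  unfolding ip_def vector_scaleR_component by (simp add: sum_distrib_left algebra_simps scaleR_conv_of_real)
lemma ip_cnj: "ip y x = cnj (ip x y)"
  by (simp add: ip_def mult.commute)
lemma ip_self: "ip x x = of_real (norm x ^ 2)"
proof -
  have "ip x x = (\<Sum>k\<in>UNIV. of_real (norm (x$k) ^ 2))"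
    unfolding ip_def by (rule sum.cong, simp, metis complex_norm_square of_real_power)
  also have "\<dots> = of_real (\<Sum>k\<in>UNIV. norm (x$k) ^ 2)" by simp
  also have "(\<Sum>k\<in>UNIV. norm (x$k) ^ 2) = norm x ^ 2"
    unfolding norm_vec_def L2_set_def by (simp add: sum_nonneg)
  finally show ?thesis .
qed

lemma proj_pp: "proj_line u ** proj_line v = (\<chi> i j. ip v u * (u$i * cnj (v$j)))"
  unfolding proj_line_def matrix_matrix_mult_def ip_def
  by (simp add: vec_eq_iff sum_distrib_left sum_distrib_right algebra_simps)

lemma trace_pp: "trace (proj_line u ** proj_line v) = ip v u * ip u v"
  unfolding proj_pp trace_def ip_def sum_product
  by (subst sum.swap) (simp add: sum_distrib_left algebra_simps)

lemma ip_unit: "norm u = 1 \<Longrightarrow> ip u u = 1"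
  by (simp add: ip_self)

lemma ip_cnj_mult: "cnj a * a = of_real (cmod a ^ 2)"
  by (metis complex_norm_square mult.commute)

lemma ip_cs:
  assumes u: "norm u = 1" and v: "norm v = 1"
  shows "cmod (ip u v) \<le> 1"
proof -
  define a where "a = ip u v"
  define r where "r = u - a *s v"
  have "ip r r = 1 - cnj a * a"
    unfolding r_def using u v
    apply (simp add: ip_diff_left ip_diff_right ip_smult_left ip_smult_right ip_unit)
    apply (simp add: a_def ip_cnj[of v u])
    done
  hence "of_real (norm r ^ 2) = (of_real (1 - cmod a ^ 2) :: complex)"
    by (simp add: ip_self ip_cnj_mult)
  hence "norm r ^ 2 = 1 - cmod a ^ 2" using of_real_eq_iff by blast
  hence "cmod a ^ 2 \<le> 1" by (metis diff_ge_0_iff_ge zero_le_power2)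
  hence "cmod a \<le> 1" using power2_le_imp_le[of "cmod a" 1] by simp
  thus ?thesis by (simp add: a_def)
qed

definition cc :: "complex^'m^'m \<Rightarrow> complex^'m^'m \<Rightarrow> real" where
  "cc P Q = Re (trace (P ** Q))"

lemma cc_pp: "cc (proj_line u) (proj_line v) = cmod (ip u v) ^ 2"
  unfolding cc_def trace_pp ip_cnj[of v u] ip_cnj_mult by simp

lemma CP_E: "P \<in> CP \<Longrightarrow> \<exists>u. norm u = 1 \<and> P = proj_line u"
  unfolding CP_def by blast

lemma cc_sym: "cc P Q = cc Q P"
  by (simp only: cc_def trace_mul_sym[of P Q])

lemma cc_range:
  assumes "P \<in> CP" "Q \<in> CP" shows "0 \<le> cc P Q" "cc P Q \<le> 1"
proof -
  obtain u v where "norm u = 1" "P = proj_line u" "norm v = 1" "Q = proj_line v"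
    using assms CP_E by metis
  thus "0 \<le> cc P Q" "cc P Q \<le> 1" using ip_cs[of u v]
    by (auto simp: cc_pp power_le_one)
qed

lemma cc_self: "P \<in> CP \<Longrightarrow> cc P P = 1"
  by (metis CP_E cc_pp ip_self norm_of_real one_power2 ip_unit norm_one)

definition G :: "real \<Rightarrow> real \<Rightarrow> complex^'m^'m \<Rightarrow> complex^'m^'m \<Rightarrow> complex^'m^'m" where
  "G \<alpha> \<beta> P Q = (1 / (\<alpha>^2 + (2*\<alpha>*\<beta> + \<beta>^2) * cc P Q)) *\<^sub>R
     (\<alpha>^2 *\<^sub>R Q + (\<alpha>*\<beta>) *\<^sub>R (P ** Q + Q ** P) + (\<beta>^2 * cc P Q) *\<^sub>R P)"

lemma proj_w:
  fixes u v :: "complex^'m"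
  defines "a \<equiv> ip v u"
  shows "proj_line (of_real \<alpha> *s v + (of_real \<beta> * a) *s u) =
    \<alpha>^2 *\<^sub>R proj_line v + (\<alpha>*\<beta>) *\<^sub>R (proj_line u ** proj_line v + proj_line v ** proj_line u)
      + (\<beta>^2 * cc (proj_line u) (proj_line v)) *\<^sub>R proj_line u"
proof -
  define c where "c = cc (proj_line u) (proj_line v)"
  have hc: "of_real c = a * cnj a"
    unfolding c_def cc_pp a_def ip_cnj[of v u] using ip_cnj_mult[of "ip u v"] by simp
  show ?thesis
    unfolding vec_eq_iff proj_pp c_def[symmetric]
    apply (simp add: vector_scaleR_component)
    apply (simp add: proj_line_def scaleR_conv_of_real hc ip_cnj[of u v] a_def[symmetric] algebra_simps power2_eq_square)
    done
qed

lemma ip_w: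
  fixes u v :: "complex^'m"
  assumes "norm u = 1" "norm v = 1"
  defines "a \<equiv> ip v u"
  shows "ip (of_real \<alpha> *s v + (of_real \<beta> * a) *s u) (of_real \<alpha> *s v + (of_real \<beta> * a) *s u)
      = of_real (\<alpha>^2 + (2*\<alpha>*\<beta> + \<beta>^2) * cmod a ^ 2)"
    "ip u (of_real \<alpha> *s v + (of_real \<beta> * a) *s u) = of_real (\<alpha> + \<beta>) * cnj a"
proof -
  have c: "of_real (cmod a ^ 2) = a * cnj a"
    using ip_cnj_mult[of a] by (simp add: mult.commute)
  have e: "complex_of_real (\<alpha>^2 + (2*\<alpha>*\<beta> + \<beta>^2) * cmod a ^ 2)
     = of_real \<alpha> * of_real \<alpha> + (2 * of_real \<alpha> * of_real \<beta> + of_real \<beta> * of_real \<beta>) * (a * cnj a)"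
    using c by (simp only: of_real_add of_real_mult of_real_power of_real_numeral power2_eq_square)
  show "ip (of_real \<alpha> *s v + (of_real \<beta> * a) *s u) (of_real \<alpha> *s v + (of_real \<beta> * a) *s u)
      = of_real (\<alpha>^2 + (2*\<alpha>*\<beta> + \<beta>^2) * cmod a ^ 2)"
    unfolding e using assms(1,2)
    apply (simp add: ip_add_left ip_add_right ip_smult_left ip_smult_right ip_unit)
    apply (simp add: a_def[symmetric] ip_cnj[of u v] algebra_simps)
    done
  show "ip u (of_real \<alpha> *s v + (of_real \<beta> * a) *s u) = of_real (\<alpha> + \<beta>) * cnj a"
    using assms(1,2)
    apply (simp add: ip_add_left ip_add_right ip_smult_left ip_smult_right ip_unit)
    apply (simp add: a_def[symmetric] ip_cnj[of u v] algebra_simps)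
    done
qed

lemma proj_scaleR: "proj_line (k *\<^sub>R w) = (k^2) *\<^sub>R proj_line w"
  unfolding proj_line_def vec_eq_iff
  apply (simp add: vector_scaleR_component)
  apply (simp add: scaleR_conv_of_real power2_eq_square)
  done

lemma G_rep:
  fixes u v :: "complex^'m"
  assumes u: "norm u = 1" and v: "norm v = 1"
    and D: "0 < \<alpha>^2 + (2*\<alpha>*\<beta> + \<beta>^2) * cc (proj_line u) (proj_line v)"
  shows "G \<alpha> \<beta> (proj_line u) (proj_line v) \<in> CP"
    "cc (proj_line u) (G \<alpha> \<beta> (proj_line u) (proj_line v)) =
       (\<alpha>+\<beta>)^2 * cc (proj_line u) (proj_line v) / (\<alpha>^2 + (2*\<alpha>*\<beta> + \<beta>^2) * cc (proj_line u) (proj_line v))"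
proof -
  define a where "a = ip v u"
  define c where "c = cc (proj_line u) (proj_line v)"
  define d where "d = \<alpha>^2 + (2*\<alpha>*\<beta> + \<beta>^2) * c"
  define w where "w = of_real \<alpha> *s v + (of_real \<beta> * a) *s u"
  define z where "z = (1 / sqrt d) *\<^sub>R w"
  have ca: "c = cmod a ^ 2" unfolding c_def a_def cc_pp ip_cnj[of v u] by simp
  have d0: "0 < d" using D unfolding d_def c_def .
  have "of_real (norm w ^ 2) = (of_real d :: complex)"
    unfolding ip_self[symmetric] w_def ip_w(1)[OF u v, folded a_def] d_def ca ..
  hence nw: "norm w ^ 2 = d" using of_real_eq_iff by blast
  have sd: "sqrt d = norm w" using nw by (metis abs_norm_cancel real_sqrt_abs)
  have nz: "norm z = 1" 
  proof -
    have "norm z = (1 / sqrt d) * norm w" unfolding z_def using d0 by simp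
    moreover have "sqrt d > 0" using d0 by simp
    ultimately show ?thesis using sd by (metis divide_self_if less_irrefl times_divide_eq_left mult_1)
  qed
  have "G \<alpha> \<beta> (proj_line u) (proj_line v) = (1/d) *\<^sub>R proj_line w"
    unfolding G_def w_def a_def proj_w c_def d_def ..
  also have "\<dots> = proj_line z" unfolding z_def proj_scaleR using d0
    by (simp add: power_divide)
  finally have Gz: "G \<alpha> \<beta> (proj_line u) (proj_line v) = proj_line z" .
  show "G \<alpha> \<beta> (proj_line u) (proj_line v) \<in> CP"
    unfolding Gz CP_def using nz by blast
  have "cc (proj_line u) (proj_line z) = cmod (ip u z) ^ 2" by (rule cc_pp)
  also have "\<dots> = (1/d) * ((\<alpha>+\<beta>)^2 * cmod a ^ 2)"
  proof -
    have "ip u z = of_real (1/sqrt d) * (of_real (\<alpha>+\<beta>) * cnj a)"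
      unfolding z_def ip_scaleR_right w_def ip_w(2)[OF u v, folded a_def] ..
    hence "cmod (ip u z) = \<bar>1/sqrt d\<bar> * (\<bar>\<alpha>+\<beta>\<bar> * cmod a)"
      by (simp only: norm_mult norm_of_real complex_mod_cnj)
    hence "cmod (ip u z) ^ 2 = (1/sqrt d)^2 * ((\<alpha>+\<beta>)^2 * cmod a ^ 2)"
      by (simp only: power_mult_distrib power2_abs)
    thus ?thesis using d0 by (simp add: power_divide)
  qed
  finally show "cc (proj_line u) (G \<alpha> \<beta> (proj_line u) (proj_line v)) =
       (\<alpha>+\<beta>)^2 * cc (proj_line u) (proj_line v) / (\<alpha>^2 + (2*\<alpha>*\<beta> + \<beta>^2) * cc (proj_line u) (proj_line v))"
    unfolding Gz c_def[symmetric] using d_def ca by simp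
qed

lemma bessel:
  assumes u: "norm u = 1" and v: "norm v = 1" and z: "norm z = 1" and vz: "ip v z = 0"
  shows "cmod (ip u z) ^ 2 \<le> 1 - cmod (ip u v) ^ 2"
proof -
  define a where "a = ip u v"
  define b where "b = ip u z"
  define r where "r = u - a *s v - b *s z"
  have zv: "ip z v = 0" using vz ip_cnj[of z v] by simp
  have "ip r r = 1 - cnj a * a - cnj b * b"
    unfolding r_def using u v z vz zv
    apply (simp add: ip_diff_left ip_diff_right ip_smult_left ip_smult_right ip_unit)
    apply (simp add: a_def[symmetric] b_def[symmetric] ip_cnj[of v u] ip_cnj[of z u] algebra_simps)
    done
  hence "of_real (norm r ^ 2) = (of_real (1 - cmod a ^ 2 - cmod b ^ 2) :: complex)"
    by (simp add: ip_self ip_cnj_mult)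
  hence "norm r ^ 2 = 1 - cmod a ^ 2 - cmod b ^ 2" using of_real_eq_iff by blast
  hence "cmod b ^ 2 \<le> 1 - cmod a ^ 2" by (metis diff_ge_0_iff_ge diff_diff_eq zero_le_power2)
  thus ?thesis by (simp add: a_def b_def)
qed

lemma ip_axis: "ip v (axis i 1) = v $ i"
  unfolding ip_def axis_def by (simp add: if_distrib cong: if_cong)

lemma two_distinct:
  assumes "CARD('m::finite) \<ge> 2" shows "\<exists>i j::'m. i \<noteq> j"
proof (rule ccontr)
  assume "\<not> ?thesis"
  hence "\<forall>i j::'m. i = j" by blast
  hence "CARD('m) \<le> Suc 0" using card_le_Suc0_iff_eq[of "UNIV::'m set"] by simp
  thus False using assms by simp
qed

lemma exists_orth:
  fixes v :: "complex^'m::finite"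
  assumes "CARD('m) \<ge> 2"
  shows "\<exists>z. norm z = 1 \<and> ip v z = 0"
proof -
  obtain i j :: 'm where ij: "i \<noteq> j" using two_distinct[OF assms] by blast
  have "\<exists>z0. z0 \<noteq> 0 \<and> ip v z0 = 0"
  proof (cases "v $ i = 0 \<and> v $ j = 0")
    case True
    thus ?thesis by (intro exI[of _ "axis i 1"]) (simp add: ip_axis)
  next
    case False
    define z0 where "z0 = cnj (v$j) *s axis i 1 - cnj (v$i) *s axis j 1"
    have "ip v z0 = 0" unfolding z0_def
      by (simp add: ip_diff_right ip_smult_right ip_axis)
    moreover have "z0 $ i = cnj (v$j)" "z0 $ j = - cnj (v$i)" unfolding z0_def using ij
      by (simp_all add: axis_def)
    hence "z0 \<noteq> 0" using False by (metis complex_cnj_zero_iff neg_equal_0_iff_equal zero_index)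
    ultimately show ?thesis by blast
  qed
  then obtain z0 where z0: "z0 \<noteq> 0" "ip v z0 = 0" by blast
  show ?thesis
    by (intro exI[of _ "(1 / norm z0) *\<^sub>R z0"]) (simp add: z0 ip_scaleR_right)
qed

lemma rnorm:
  assumes u: "norm u = 1" and v: "norm v = 1"
  shows "norm (u - ip u v *s v) ^ 2 = 1 - cmod (ip u v) ^ 2"
    "ip u (u - ip u v *s v) = 1 - cnj (ip u v) * ip u v"
    "ip v (u - ip u v *s v) = 0"
proof -
  define a where "a = ip u v"
  define r where "r = u - a *s v"
  have "ip r r = 1 - cnj a * a"
    unfolding r_def using u v
    apply (simp add: ip_diff_left ip_diff_right ip_smult_left ip_smult_right ip_unit)
    apply (simp add: a_def ip_cnj[of v u])
    done
  hence "of_real (norm r ^ 2) = (of_real (1 - cmod a ^ 2) :: complex)"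
    by (simp add: ip_self ip_cnj_mult)
  thus "norm (u - ip u v *s v) ^ 2 = 1 - cmod (ip u v) ^ 2" using of_real_eq_iff
    unfolding r_def a_def by blast
  show "ip u (u - ip u v *s v) = 1 - cnj (ip u v) * ip u v"
    using u by (simp add: ip_diff_right ip_smult_right ip_unit)
  show "ip v (u - ip u v *s v) = 0"
    using v by (simp add: ip_diff_right ip_smult_right ip_unit ip_cnj[of v u])
qed

lemma fs_dist_cc: "fs_dist P Q = 2 * arccos (sqrt (cc P Q))"
  by (simp add: fs_dist_def cc_def)

lemma arccos_half_pi_iff:
  assumes "0 \<le> s" "s \<le> 1" shows "2 * arccos s = pi \<longleftrightarrow> s = 0"
proof
  assume "2 * arccos s = pi"
  hence a: "arccos s = pi/2" by linarith
  have "s = cos (arccos s)" using assms by (simp add: cos_arccos)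
  also have "\<dots> = 0" by (simp add: a)
  finally show "s = 0" .
qed simp

lemma antipodal_iff:
  assumes "Q \<in> CP" shows "Z \<in> antipodal Q \<longleftrightarrow> Z \<in> CP \<and> cc Q Z = 0"
proof (cases "Z \<in> CP")
  case True
  have "0 \<le> sqrt (cc Q Z)" "sqrt (cc Q Z) \<le> 1" using cc_range[OF assms True] by auto
  thus ?thesis unfolding antipodal_def fs_dist_cc using True arccos_half_pi_iff by simp
qed (simp add: antipodal_def)

lemma setdist_cc:
  assumes card: "CARD('m::finite) \<ge> 2" and P: "P \<in> CP" and Q: "(Q :: complex^'m^'m) \<in> CP"
  shows "fs_setdist P (antipodal Q) = 2 * arccos (sqrt (1 - cc P Q))"
proof -
  obtain u v where u: "norm u = 1" "P = proj_line u" and v: "norm v = 1" "Q = proj_line v"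
    using P Q CP_E by metis
  define a where "a = ip u v"
  define r where "r = u - a *s v"
  have c: "cc P Q = cmod a ^ 2" unfolding u v a_def cc_pp ..
  have rn: "norm r ^ 2 = 1 - cmod a ^ 2" unfolding r_def a_def using rnorm(1)[OF u(1) v(1)] .
  have "\<exists>z. norm z = 1 \<and> ip v z = 0 \<and> cmod (ip u z) ^ 2 = 1 - cmod a ^ 2"
  proof (cases "r = 0")
    case True
    obtain z where z: "norm z = 1" "ip v z = 0" using exists_orth[OF card] by blast
    have "u = a *s v" using True unfolding r_def by simp
    hence "ip u z = 0" using z by (simp add: ip_smult_left)
    moreover have "1 - cmod a ^ 2 = 0" using rn True by simp
    ultimately show ?thesis using z by auto
  next
    case False
    define z where "z = (1 / norm r) *\<^sub>R r"
    have "ip v z = 0" unfolding z_def ip_scaleR_right r_def a_def rnorm(3)[OF u(1) v(1)] by simp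
    moreover have "norm z = 1" unfolding z_def using False by simp
    moreover have "ip u z = of_real (1 / norm r) * (1 - cnj a * a)"
      unfolding z_def ip_scaleR_right r_def a_def rnorm(2)[OF u(1) v(1)] ..
    hence "ip u z = of_real (1 / norm r) * of_real (norm r ^ 2)"
      using rn by (simp add: ip_cnj_mult)
    hence "ip u z = of_real (norm r)" using False by (simp add: power2_eq_square)
    hence "cmod (ip u z) ^ 2 = 1 - cmod a ^ 2" using rn by simp
    ultimately show ?thesis by blast
  qed
  then obtain z where z: "norm z = 1" "ip v z = 0" "cmod (ip u z) ^ 2 = 1 - cmod a ^ 2" by blast
  have ZA: "proj_line z \<in> antipodal Q"
    unfolding antipodal_iff[OF Q] using z v
    by (auto simp: CP_def cc_pp)
  show ?thesis
    unfolding fs_setdist_def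
  proof (rule cInf_eq_minimum)
    show "2 * arccos (sqrt (1 - cc P Q)) \<in> fs_dist P ` antipodal Q"
    proof -
      have "cc P (proj_line z) = cmod (ip u z) ^ 2" by (simp add: u(2) cc_pp)
      thus ?thesis using ZA z by (intro image_eqI[of _ _ "proj_line z"]) (auto simp: fs_dist_cc c)
    qed
  next
    fix x assume "x \<in> fs_dist P ` antipodal Q"
    then obtain Z where Z: "Z \<in> antipodal Q" "x = fs_dist P Z" by blast
    hence ZC: "Z \<in> CP" "cc Q Z = 0" using antipodal_iff[OF Q] by auto
    obtain y where y: "norm y = 1" "Z = proj_line y" using ZC CP_E by metis
    have "ip v y = 0" using ZC(2) unfolding v y cc_pp by simp
    hence le: "cc P Z \<le> 1 - cc P Q"
      using bessel[OF u(1) v(1) y(1)] unfolding u(2) v(2) y(2) cc_pp by simp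
    have r1: "0 \<le> cc P Z" "cc P Q \<le> 1" "0 \<le> cc P Q" using cc_range P Q ZC by auto
    have "sqrt (cc P Z) \<le> sqrt (1 - cc P Q)" using le by simp
    hence "arccos (sqrt (1 - cc P Q)) \<le> arccos (sqrt (cc P Z))"
      using r1 by (subst arccos_le_mono) auto
    thus "2 * arccos (sqrt (1 - cc P Q)) \<le> x" unfolding Z fs_dist_cc by simp
  qed
qed

lemma cont_mm:
  fixes f g :: "'a::topological_space \<Rightarrow> complex^'m^'m"
  assumes "continuous_on S f" "continuous_on S g"
  shows "continuous_on S (\<lambda>x. f x ** g x)"
  unfolding matrix_matrix_mult_def
  by (intro continuous_on_vec_lambda continuous_on_sum continuous_on_mult continuous_on_component assms)

lemma cont_cc:
  fixes f g :: "'a::topological_space \<Rightarrow> complex^'m^'m"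
  assumes "continuous_on S f" "continuous_on S g"
  shows "continuous_on S (\<lambda>x. cc (f x) (g x))"
  unfolding cc_def trace_def
  by (intro continuous_on_Re continuous_on_sum continuous_on_component cont_mm assms)

lemma cont_G:
  fixes P Q :: "'a::topological_space \<Rightarrow> complex^'m^'m"
  assumes "continuous_on S a" "continuous_on S b" "continuous_on S P" "continuous_on S Q"
    and "\<And>x. x \<in> S \<Longrightarrow> (a x)^2 + (2 * a x * b x + (b x)^2) * cc (P x) (Q x) \<noteq> 0"
  shows "continuous_on S (\<lambda>x. G (a x) (b x) (P x) (Q x))"
  unfolding G_def
  by (intro continuous_intros cont_mm cont_cc assms) (use assms(5) in auto)

lemma heq_retract:
  assumes XY: "X \<subseteq> Y" and g: "continuous_on Y g" "g ` Y \<subseteq> X" "\<And>x. x \<in> X \<Longrightarrow> g x = x"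
    and H: "homotopic_with (\<lambda>h. True) (top_of_set Y) (top_of_set Y) id g"
  shows "homotopy_equivalence_map (top_of_set X) (top_of_set Y) id"
  unfolding homotopy_equivalence_map_def
proof (intro conjI exI)
  show "continuous_map (top_of_set X) (top_of_set Y) id"
    using XY by (auto simp: continuous_on_id)
  show "continuous_map (top_of_set Y) (top_of_set X) g" using g by auto
  show "homotopic_with (\<lambda>h. True) (top_of_set X) (top_of_set X) (g \<circ> id) id"
    by (rule homotopic_with_equal) (use g XY in \<open>auto intro: continuous_on_subset\<close>)
  show "homotopic_with (\<lambda>h. True) (top_of_set Y) (top_of_set Y) (id \<circ> g) id"
    using homotopic_with_symD[OF H] by simp
qed

lemma homot_I:
  assumes "continuous_on ({0..1::real} \<times> Y) H" "H ` ({0..1} \<times> Y) \<subseteq> Y"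
    "\<And>x. x \<in> Y \<Longrightarrow> H (0, x) = f x" "\<And>x. x \<in> Y \<Longrightarrow> H (1, x) = g x"
  shows "homotopic_with (\<lambda>h. True) (top_of_set Y) (top_of_set Y) f g"
  apply (subst homotopic_with)
   apply simp
  apply (rule exI[of _ H])
  using assms by (auto simp: image_subset_iff)

lemma phi_mono:
  assumes "0 \<le> c" "c \<le> c'" "c' \<le> 1"
  shows "2 * arccos (sqrt c') \<le> 2 * arccos (sqrt c)"
  using assms by (subst mult_le_cancel_left_pos) (auto simp: arccos_le_mono)

lemma phi_range:
  assumes "0 \<le> c" "c \<le> 1"
  shows "0 \<le> 2 * arccos (sqrt c)" "2 * arccos (sqrt c) \<le> pi"
proof -
  have "-1 \<le> sqrt c" using assms by (meson order_trans neg_le_0_iff_le real_sqrt_ge_zero zero_le_one)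
  thus "0 \<le> 2 * arccos (sqrt c)" "2 * arccos (sqrt c) \<le> pi"
    using arccos_lbound[of "sqrt c"] arccos_le_pi2[of "sqrt c"] assms by auto
qed

lemma Y_odd:
  fixes P Q :: "complex^'m::finite^'m"
  assumes "CARD('m) \<ge> 2" "odd i"
  shows "(P,Q,t) \<in> Zset i \<inter> (CP \<times> CP \<times> UNIV - Zset (Suc i)) \<longleftrightarrow>
    P \<in> CP \<and> Q \<in> CP \<and> 2 * arccos (sqrt (cc P Q)) < t - (real i - 1) * pi
      \<and> \<not> 2 * arccos (sqrt (1 - cc P Q)) < t - real i * pi"
  unfolding Zset_def using assms by (auto simp: fs_dist_cc setdist_cc)

lemma Y_even:
  fixes P Q :: "complex^'m::finite^'m"
  assumes "CARD('m) \<ge> 2" "even i"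
  shows "(P,Q,t) \<in> Zset i \<inter> (CP \<times> CP \<times> UNIV - Zset (Suc i)) \<longleftrightarrow>
    P \<in> CP \<and> Q \<in> CP \<and> 2 * arccos (sqrt (1 - cc P Q)) < t - (real i - 1) * pi
      \<and> \<not> 2 * arccos (sqrt (cc P Q)) < t - real i * pi"
  unfolding Zset_def using assms by (auto simp: fs_dist_cc setdist_cc)

lemma lin_interp:
  fixes x e l :: real
  assumes "-pi < x" "x \<le> pi" "0 < e" "e < pi" "0 \<le> l" "l \<le> 1"
  shows "-pi < (1-l)*x + l*e" "(1-l)*x + l*e \<le> pi"
proof -
  have "0 \<le> (1-l)*(x+pi)" "0 \<le> l*(e+pi)" using assms by auto
  moreover have "0 < (1-l)*(x+pi) \<or> 0 < l*(e+pi)" using assms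
    by (cases "l = 1") auto
  ultimately show "-pi < (1-l)*x + l*e" by (auto simp: algebra_simps)
  have "0 \<le> (1-l)*(pi-x)" "0 \<le> l*(pi-e)" using assms by auto
  thus "(1-l)*x + l*e \<le> pi" by (auto simp: algebra_simps)
qed

lemma G10: "G 1 0 P Q = Q"
  by (simp add: G_def)

lemma G01: "cc P Q \<noteq> 0 \<Longrightarrow> G 0 1 P Q = P"
  by (simp add: G_def)

lemma G1m1:
  assumes "P \<in> CP" "Q \<in> CP" "cc P Q = 0" shows "G 1 (-1) P Q = Q"
proof -
  obtain u v where u: "norm u = 1" "P = proj_line u" and v: "norm v = 1" "Q = proj_line v"
    using assms CP_E by metis
  have "ip u v = 0" using assms(3) unfolding u v cc_pp by simp
  hence "ip v u = 0" using ip_cnj[of v u] by simp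
  hence "P ** Q = 0" "Q ** P = 0" unfolding u v proj_pp using \<open>ip u v = 0\<close>
    by (simp_all add: vec_eq_iff)
  thus ?thesis using assms(3) by (simp add: G_def)
qed

lemma img4:
  assumes "\<And>l P Q t. l \<in> {0..1::real} \<Longrightarrow> (P,Q,t) \<in> Y \<Longrightarrow> H (l,P,Q,t) \<in> Y"
  shows "H ` ({0..1::real} \<times> Y) \<subseteq> Y"
proof
  fix w assume "w \<in> H ` ({0..1} \<times> Y)"
  then obtain z where z: "z \<in> {0..1} \<times> Y" "w = H z" by blast
  obtain l P Q t where "z = (l,P,Q,t)" using prod_cases4 by blast
  thus "w \<in> Y" using z assms by auto
qed

lemma all4:
  assumes "\<And>l P Q t. l \<in> {0..1::real} \<Longrightarrow> (P,Q,t) \<in> Y \<Longrightarrow> R (l,P,Q,t)"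
  shows "\<And>z. z \<in> {0..1::real} \<times> Y \<Longrightarrow> R z"
proof -
  fix z assume z: "z \<in> {0..1::real} \<times> Y"
  obtain l P Q t where "z = (l,P,Q,t)" using prod_cases4 by blast
  thus "R z" using z assms by auto
qed

lemma D_odd:
  fixes c l :: real
  assumes "0 < c" "c \<le> 1" "0 \<le> l" "l \<le> 1"
  shows "c \<le> (1-l)^2 + (2*(1-l)*l + l^2)*c" "(1-l)^2 + (2*(1-l)*l + l^2)*c \<le> 1"
proof -
  have "(1-l)^2 + (2*(1-l)*l + l^2)*c = c + (1-l)^2*(1-c)" by (simp add: algebra_simps power2_eq_square)
  thus "c \<le> (1-l)^2 + (2*(1-l)*l + l^2)*c" using assms by simp
  have "(1-l)^2 + (2*(1-l)*l + l^2)*c = 1 - l*(2-l)*(1-c)" by (simp add: algebra_simps power2_eq_square)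
  thus "(1-l)^2 + (2*(1-l)*l + l^2)*c \<le> 1" using assms by simp
qed

lemma D_even:
  fixes c l :: real
  assumes "0 \<le> c" "c < 1" "0 \<le> l" "l \<le> 1"
  shows "1 - c \<le> 1^2 + (2*1*(-l) + (-l)^2)*c" "(1-l)^2 \<le> 1^2 + (2*1*(-l) + (-l)^2)*c"
proof -
  have "1^2 + (2*1*(-l) + (-l)^2)*c = (1 - c) + (1-l)^2*c" by (simp add: algebra_simps power2_eq_square)
  thus "1 - c \<le> 1^2 + (2*1*(-l) + (-l)^2)*c" using assms by simp
  have "1^2 + (2*1*(-l) + (-l)^2)*c = (1-l)^2 + l*(2-l)*(1-c)" by (simp add: algebra_simps power2_eq_square)
  thus "(1-l)^2 \<le> 1^2 + (2*1*(-l) + (-l)^2)*c" using assms by simp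
qed

lemma odd_case:
  fixes \<epsilon> :: real
  assumes card: "CARD('m::finite) \<ge> 2" and e: "0 < \<epsilon>" "\<epsilon> < pi" and oi: "odd i"
  shows "homotopy_equivalence_map
             (subtopology euclidean
                {(x, x, real i * pi + \<epsilon>) | x :: complex^'m^'m. x \<in> CP})
             (subtopology euclidean
                (Zset i \<inter> ((CP \<times> CP \<times> UNIV) - Zset (Suc i))))
             id"
proof -
  define Y :: "((complex^'m^'m) \<times> (complex^'m^'m) \<times> real) set"
    where "Y = Zset i \<inter> ((CP \<times> CP \<times> UNIV) - Zset (Suc i))"
  define T where "T = real i * pi + \<epsilon>"
  define X :: "((complex^'m^'m) \<times> (complex^'m^'m) \<times> real) set"
    where "X = {(x, x, T) | x. x \<in> CP}"
  have Ymem: "(P,Q,t) \<in> Y \<longleftrightarrow> P \<in> CP \<and> Q \<in> CP \<and> 2 * arccos (sqrt (cc P Q)) < t - (real i - 1) * pi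
      \<and> \<not> 2 * arccos (sqrt (1 - cc P Q)) < t - real i * pi" for P Q t
    unfolding Y_def by (rule Y_odd[OF card oi])
  have Yc: "0 < cc P Q" if "(P,Q,t) \<in> Y" for P Q t
  proof (rule ccontr)
    assume "\<not> 0 < cc P Q"
    moreover have "0 \<le> cc P Q" using that Ymem cc_range by blast
    ultimately have "cc P Q = 0" by simp
    thus False using that unfolding Ymem by (simp add: algebra_simps)
  qed
  have Yt: "-pi < t - real i * pi \<and> t - real i * pi \<le> pi" if "(P,Q,t) \<in> Y" for P Q t
  proof -
    have r: "0 \<le> cc P Q" "cc P Q \<le> 1" using that Ymem cc_range by blast+
    have "0 \<le> 2 * arccos (sqrt (cc P Q))" "2 * arccos (sqrt (1 - cc P Q)) \<le> pi"
      using phi_range r by auto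
    thus ?thesis using that unfolding Ymem by (auto simp: algebra_simps)
  qed
  define g where "g = (\<lambda>z::(complex^'m^'m) \<times> (complex^'m^'m) \<times> real. (fst z, fst z, T))"
  define k where "k = (\<lambda>z::(complex^'m^'m) \<times> (complex^'m^'m) \<times> real. (fst z, fst z, snd (snd z)))"
  have XY: "X \<subseteq> Y"
  proof
    fix z assume "z \<in> X"
    then obtain P where P: "P \<in> CP" "z = (P,P,T)" unfolding X_def by blast
    show "z \<in> Y" unfolding P(2) Ymem T_def using P(1) cc_self[OF P(1)] e by (simp add: algebra_simps)
  qed
  define h1 :: "real \<times> (complex^'m^'m) \<times> (complex^'m^'m) \<times> real \<Rightarrow> (complex^'m^'m) \<times> (complex^'m^'m) \<times> real"
    where "h1 = (\<lambda>z. (fst (snd z), G (1 - fst z) (fst z) (fst (snd z)) (fst (snd (snd z))), snd (snd (snd z))))"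
  have H1: "homotopic_with (\<lambda>h. True) (top_of_set Y) (top_of_set Y) id k"
  proof (rule homot_I[where H = h1])
    have D: "(1 - l)^2 + (2 * (1 - l) * l + l^2) * cc P Q \<noteq> 0" if "l \<in> {0..1}" "(P,Q,t) \<in> Y" for l P Q t
    proof -
      have "0 < cc P Q" "cc P Q \<le> 1" using Yc that cc_range Ymem by blast+
      thus ?thesis using D_odd[of "cc P Q" l] that by auto
    qed
    show "continuous_on ({0..1} \<times> Y) h1" unfolding h1_def
    proof (intro continuous_intros cont_G)
      fix z assume z: "z \<in> {0..1::real} \<times> Y"
      obtain l P Q t where "z = (l,P,Q,t)" using prod_cases4 by blast
      thus "(1 - fst z)^2 + (2 * (1 - fst z) * fst z + (fst z)^2) * cc (fst (snd z)) (fst (snd (snd z))) \<noteq> 0"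
        using z D by auto
    qed
    show "h1 ` ({0..1} \<times> Y) \<subseteq> Y" unfolding h1_def
    proof (rule img4)
      fix l P Q t assume l: "l \<in> {0..1::real}" and Y: "(P,Q,t) \<in> Y"
      have PQ: "P \<in> CP" "Q \<in> CP" using Y Ymem by blast+
      obtain u v where u: "norm u = 1" "P = proj_line u" and v: "norm v = 1" "Q = proj_line v"
        using PQ CP_E by metis
      have c: "0 < cc P Q" "cc P Q \<le> 1" using Yc Y cc_range PQ by blast+
      define d where "d = (1 - l)^2 + (2 * (1 - l) * l + l^2) * cc P Q"
      have d: "cc P Q \<le> d" "d \<le> 1" using D_odd[of "cc P Q" l] c l unfolding d_def by auto
      have GC: "G (1-l) l P Q \<in> CP" and Gc: "cc P (G (1-l) l P Q) = (1 - l + l)^2 * cc P Q / d"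
        using G_rep[OF u(1) v(1), of "1-l" l] d c unfolding u(2) v(2) d_def by auto
      have c': "cc P Q \<le> cc P (G (1-l) l P Q)" unfolding Gc using d c
        by (simp add: le_divide_eq)
      have c'1: "cc P (G (1-l) l P Q) \<le> 1" using cc_range[OF PQ(1) GC] by simp
      have "2 * arccos (sqrt (cc P (G (1-l) l P Q))) \<le> 2 * arccos (sqrt (cc P Q))"
        by (rule phi_mono) (use c c' c'1 in auto)
      moreover have "2 * arccos (sqrt (1 - cc P Q)) \<le> 2 * arccos (sqrt (1 - cc P (G (1-l) l P Q)))"
        by (rule phi_mono) (use c c' c'1 in auto)
      ultimately show "(fst (snd (l,P,Q,t)), G (1 - fst (l,P,Q,t)) (fst (l,P,Q,t)) (fst (snd (l,P,Q,t))) (fst (snd (snd (l,P,Q,t)))), snd (snd (snd (l,P,Q,t)))) \<in> Y"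
        using Y GC PQ unfolding Ymem by auto
    qed
    show "h1 (0, x) = id x" if "x \<in> Y" for x
      by (simp add: h1_def G10)
    show "h1 (1, x) = k x" if "x \<in> Y" for x
    proof -
      obtain P Q t where x: "x = (P,Q,t)" using prod_cases3 by blast
      have "cc P Q \<noteq> 0" using Yc that x by force
      thus ?thesis by (simp add: h1_def k_def x G01)
    qed
  qed
  define h2 :: "real \<times> (complex^'m^'m) \<times> (complex^'m^'m) \<times> real \<Rightarrow> (complex^'m^'m) \<times> (complex^'m^'m) \<times> real"
    where "h2 = (\<lambda>z. (fst (snd z), fst (snd z), (1 - fst z) * snd (snd (snd z)) + fst z * T))"
  have H2: "homotopic_with (\<lambda>h. True) (top_of_set Y) (top_of_set Y) k g"
  proof (rule homot_I[where H = h2])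
    show "continuous_on ({0..1} \<times> Y) h2" unfolding h2_def
      by (intro continuous_intros)
    show "h2 ` ({0..1} \<times> Y) \<subseteq> Y"
    proof (rule img4)
      fix l P Q t assume l: "l \<in> {0..1::real}" and Y: "(P,Q,t) \<in> Y"
      have P: "P \<in> CP" using Y Ymem by blast
      have "-pi < (1-l)*(t - real i * pi) + l*\<epsilon>" "(1-l)*(t - real i * pi) + l*\<epsilon> \<le> pi"
        using lin_interp[of "t - real i * pi" \<epsilon> l] Yt[OF Y] e l by auto
      moreover have "(1-l)*t + l*T - real i * pi = (1-l)*(t - real i * pi) + l*\<epsilon>"
        unfolding T_def by (simp add: algebra_simps)
      ultimately show "h2 (l,P,Q,t) \<in> Y" unfolding h2_def Ymem using P cc_self[OF P]
        by (simp add: algebra_simps)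
    qed
    show "h2 (0, x) = k x" if "x \<in> Y" for x
      by (simp add: h2_def k_def)
    show "h2 (1, x) = g x" if "x \<in> Y" for x
      by (simp add: h2_def g_def)
  qed
  have "homotopy_equivalence_map (top_of_set X) (top_of_set Y) id"
  proof (rule heq_retract[OF XY])
    show "continuous_on Y g" unfolding g_def by (intro continuous_intros)
    show "g ` Y \<subseteq> X"
    proof
      fix w assume "w \<in> g ` Y"
      then obtain z where z: "z \<in> Y" "w = g z" by blast
      obtain P Q t where zz: "z = (P,Q,t)" using prod_cases3 by blast
      have "P \<in> CP" using z zz Ymem by blast
      thus "w \<in> X" unfolding X_def z zz g_def by auto
    qed
    show "g x = x" if "x \<in> X" for x using that unfolding X_def g_def by auto
    show "homotopic_with (\<lambda>h. True) (top_of_set Y) (top_of_set Y) id g"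
      using homotopic_with_trans[OF H1 H2] .
  qed
  thus ?thesis unfolding X_def Y_def T_def .
qed


lemma even_case:
  fixes \<epsilon> :: real
  assumes card: "CARD('m::finite) \<ge> 2" and e: "0 < \<epsilon>" "\<epsilon> < pi" and ei: "even i"
  shows "homotopy_equivalence_map
             (subtopology euclidean
                {(x, y, real i * pi + \<epsilon>) | x y :: complex^'m^'m. x \<in> CP \<and> y \<in> antipodal x})
             (subtopology euclidean
                (Zset i \<inter> ((CP \<times> CP \<times> UNIV) - Zset (Suc i))))
             id"
proof -
  define Y :: "((complex^'m^'m) \<times> (complex^'m^'m) \<times> real) set"
    where "Y = Zset i \<inter> ((CP \<times> CP \<times> UNIV) - Zset (Suc i))"
  define T where "T = real i * pi + \<epsilon>"
  define X :: "((complex^'m^'m) \<times> (complex^'m^'m) \<times> real) set"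
    where "X = {(x, y, T) | x y. x \<in> CP \<and> y \<in> antipodal x}"
  have Ymem: "(P,Q,t) \<in> Y \<longleftrightarrow> P \<in> CP \<and> Q \<in> CP \<and> 2 * arccos (sqrt (1 - cc P Q)) < t - (real i - 1) * pi
      \<and> \<not> 2 * arccos (sqrt (cc P Q)) < t - real i * pi" for P Q t
    unfolding Y_def by (rule Y_even[OF card ei])
  have Yc: "cc P Q < 1" if "(P,Q,t) \<in> Y" for P Q t
  proof (rule ccontr)
    assume "\<not> cc P Q < 1"
    moreover have "cc P Q \<le> 1" using that Ymem cc_range by blast
    ultimately have "cc P Q = 1" by simp
    thus False using that unfolding Ymem by (simp add: algebra_simps)
  qed
  have Yt: "-pi < t - real i * pi \<and> t - real i * pi \<le> pi" if "(P,Q,t) \<in> Y" for P Q t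
  proof -
    have r: "0 \<le> cc P Q" "cc P Q \<le> 1" using that Ymem cc_range by blast+
    have "0 \<le> 2 * arccos (sqrt (1 - cc P Q))" "2 * arccos (sqrt (cc P Q)) \<le> pi"
      using phi_range r by auto
    thus ?thesis using that unfolding Ymem by (auto simp: algebra_simps)
  qed
  have Gprop: "G 1 (-l) P Q \<in> CP \<and> 0 \<le> cc P (G 1 (-l) P Q) \<and> cc P (G 1 (-l) P Q) \<le> cc P Q
      \<and> (l = 1 \<longrightarrow> cc P (G 1 (-l) P Q) = 0)"
    if l: "l \<in> {0..1::real}" and Y: "(P,Q,t) \<in> Y" for l P Q t
  proof -
    have PQ: "P \<in> CP" "Q \<in> CP" using Y Ymem by blast+
    obtain u v where u: "norm u = 1" "P = proj_line u" and v: "norm v = 1" "Q = proj_line v"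
      using PQ CP_E by metis
    have c: "0 \<le> cc P Q" "cc P Q < 1" using Yc Y cc_range PQ by blast+
    define d where "d = 1^2 + (2 * 1 * (-l) + (-l)^2) * cc P Q"
    have d: "1 - cc P Q \<le> d" "(1-l)^2 \<le> d" using D_even[of "cc P Q" l] c l unfolding d_def by auto
    have d0: "0 < d" using d c by simp
    have GC: "G 1 (-l) P Q \<in> CP" and Gc: "cc P (G 1 (-l) P Q) = (1 + (-l))^2 * cc P Q / d"
      using G_rep[OF u(1) v(1), of 1 "-l"] d0 unfolding u(2) v(2) d_def by auto
    have "(1 + (-l))^2 * cc P Q / d \<le> cc P Q"
      using d d0 c mult_right_mono[OF d(2) c(1)] by (simp add: divide_le_eq mult.commute)
    moreover have "0 \<le> cc P (G 1 (-l) P Q)" using cc_range[OF PQ(1) GC] by simp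
    ultimately show ?thesis using GC Gc by auto
  qed
  have Gcont: "continuous_on S (\<lambda>z. G 1 (- lam z) (P z) (Q z))"
    if hyp: "continuous_on S lam" "continuous_on S P" "continuous_on S Q"
       "\<And>z. z \<in> S \<Longrightarrow> lam z \<in> {0..1} \<and> (\<exists>t. (P z, Q z, t) \<in> Y)" for S lam P Q
  proof (rule cont_G)
    show "continuous_on S (\<lambda>x. 1)" by simp
    show "continuous_on S (\<lambda>x. - lam x)" using hyp by (intro continuous_intros)
    fix z assume z: "z \<in> S"
    obtain t where t: "(P z, Q z, t) \<in> Y" using hyp(4)[OF z] by blast
    have c: "0 \<le> cc (P z) (Q z)" "cc (P z) (Q z) < 1" using t Yc Ymem cc_range by blast+
    thus "1^2 + (2 * 1 * (- lam z) + (- lam z)^2) * cc (P z) (Q z) \<noteq> 0"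
      using D_even[of "cc (P z) (Q z)" "lam z"] hyp(4)[OF z] by auto
  qed (use hyp in auto)
  define g where "g = (\<lambda>z::(complex^'m^'m) \<times> (complex^'m^'m) \<times> real. (fst z, G 1 (-1) (fst z) (fst (snd z)), T))"
  define k where "k = (\<lambda>z::(complex^'m^'m) \<times> (complex^'m^'m) \<times> real. (fst z, G 1 (-1) (fst z) (fst (snd z)), snd (snd z)))"
  have XY: "X \<subseteq> Y"
  proof
    fix z assume "z \<in> X"
    then obtain P Q where P: "P \<in> CP" "Q \<in> antipodal P" "z = (P,Q,T)" unfolding X_def by blast
    have "Q \<in> CP" "cc P Q = 0" using P(2) antipodal_iff[OF P(1)] by auto
    thus "z \<in> Y" unfolding P(3) Ymem T_def using P(1) e by (simp add: algebra_simps)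
  qed
  define h1 :: "real \<times> (complex^'m^'m) \<times> (complex^'m^'m) \<times> real \<Rightarrow> (complex^'m^'m) \<times> (complex^'m^'m) \<times> real"
    where "h1 = (\<lambda>z. (fst (snd z), G 1 (- fst z) (fst (snd z)) (fst (snd (snd z))), snd (snd (snd z))))"
  have H1: "homotopic_with (\<lambda>h. True) (top_of_set Y) (top_of_set Y) id k"
  proof (rule homot_I[where H = h1])
    show "continuous_on ({0..1} \<times> Y) h1" unfolding h1_def
    proof (intro continuous_intros Gcont)
      fix z assume z: "z \<in> {0..1::real} \<times> Y"
      obtain l P Q t where "z = (l,P,Q,t)" using prod_cases4 by blast
      thus "fst z \<in> {0..1} \<and> (\<exists>t. (fst (snd z), fst (snd (snd z)), t) \<in> Y)"
        using z by auto
    qed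
    show "h1 ` ({0..1} \<times> Y) \<subseteq> Y" unfolding h1_def
    proof (rule img4)
      fix l P Q t assume l: "l \<in> {0..1::real}" and Y: "(P,Q,t) \<in> Y"
      have PQ: "P \<in> CP" "Q \<in> CP" using Y Ymem by blast+
      have c: "0 \<le> cc P Q" "cc P Q \<le> 1" using cc_range PQ by blast+
      note G = Gprop[OF l Y]
      have "2 * arccos (sqrt (cc P Q)) \<le> 2 * arccos (sqrt (cc P (G 1 (-l) P Q)))"
        by (rule phi_mono) (use c G in auto)
      moreover have "2 * arccos (sqrt (1 - cc P (G 1 (-l) P Q))) \<le> 2 * arccos (sqrt (1 - cc P Q))"
        by (rule phi_mono) (use c G in auto)
      ultimately show "(fst (snd (l,P,Q,t)), G 1 (- fst (l,P,Q,t)) (fst (snd (l,P,Q,t))) (fst (snd (snd (l,P,Q,t)))), snd (snd (snd (l,P,Q,t)))) \<in> Y"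
        using Y G PQ unfolding Ymem by auto
    qed
    show "h1 (0, x) = id x" if "x \<in> Y" for x
      by (simp add: h1_def G10)
    show "h1 (1, x) = k x" if "x \<in> Y" for x
      by (simp add: h1_def k_def)
  qed
  define h2 :: "real \<times> (complex^'m^'m) \<times> (complex^'m^'m) \<times> real \<Rightarrow> (complex^'m^'m) \<times> (complex^'m^'m) \<times> real"
    where "h2 = (\<lambda>z. (fst (snd z), G 1 (-1) (fst (snd z)) (fst (snd (snd z))), (1 - fst z) * snd (snd (snd z)) + fst z * T))"
  have H2: "homotopic_with (\<lambda>h. True) (top_of_set Y) (top_of_set Y) k g"
  proof (rule homot_I[where H = h2])
    show "continuous_on ({0..1} \<times> Y) h2" unfolding h2_def
    proof (intro continuous_intros Gcont[of _ "\<lambda>z. 1", simplified])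
      fix z assume z: "z \<in> {0..1::real} \<times> Y"
      obtain l P Q t where "z = (l,P,Q,t)" using prod_cases4 by blast
      thus "(\<exists>t. (fst (snd z), fst (snd (snd z)), t) \<in> Y)"
        using z by auto
    qed
    show "h2 ` ({0..1} \<times> Y) \<subseteq> Y"
    proof (rule img4)
      fix l P Q t assume l: "l \<in> {0..1::real}" and Y: "(P,Q,t) \<in> Y"
      have P: "P \<in> CP" using Y Ymem by blast
      note G = Gprop[OF _ Y, of 1]
      have "-pi < (1-l)*(t - real i * pi) + l*\<epsilon>" "(1-l)*(t - real i * pi) + l*\<epsilon> \<le> pi"
        using lin_interp[of "t - real i * pi" \<epsilon> l] Yt[OF Y] e l by auto
      moreover have "(1-l)*t + l*T - real i * pi = (1-l)*(t - real i * pi) + l*\<epsilon>"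
        unfolding T_def by (simp add: algebra_simps)
      ultimately show "h2 (l,P,Q,t) \<in> Y" unfolding h2_def Ymem using P G
        by (simp add: algebra_simps)
    qed
    show "h2 (0, x) = k x" if "x \<in> Y" for x
      by (simp add: h2_def k_def)
    show "h2 (1, x) = g x" if "x \<in> Y" for x
      by (simp add: h2_def g_def)
  qed
  have "homotopy_equivalence_map (top_of_set X) (top_of_set Y) id"
  proof (rule heq_retract[OF XY])
    show "continuous_on Y g" unfolding g_def
    proof (intro continuous_intros Gcont[of _ "\<lambda>z. 1", simplified])
      fix z assume z: "z \<in> Y"
      obtain P Q t where "z = (P,Q,t)" using prod_cases3 by blast
      thus "(\<exists>t. (fst z, fst (snd z), t) \<in> Y)"
        using z by auto
    qed
    show "g ` Y \<subseteq> X"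
    proof
      fix w assume "w \<in> g ` Y"
      then obtain z where z: "z \<in> Y" "w = g z" by blast
      obtain P Q t where zz: "z = (P,Q,t)" using prod_cases3 by blast
      have P: "P \<in> CP" using z zz Ymem by blast
      have "G 1 (-1) P Q \<in> antipodal P" unfolding antipodal_iff[OF P]
        using Gprop[of 1 P Q t] z zz by auto
      thus "w \<in> X" unfolding X_def z zz g_def using P by auto
    qed
    show "g x = x" if xX: "x \<in> X" for x
    proof -
      obtain P Q where P: "P \<in> CP" "Q \<in> antipodal P" "x = (P,Q,T)" using xX unfolding X_def by blast
      have "Q \<in> CP" "cc P Q = 0" using P(2) antipodal_iff[OF P(1)] by auto
      thus ?thesis unfolding P(3) g_def using G1m1 P(1) by simp
    qed
    show "homotopic_with (\<lambda>h. True) (top_of_set Y) (top_of_set Y) id g"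
      using homotopic_with_trans[OF H1 H2] .
  qed
  thus ?thesis unfolding X_def Y_def T_def .
qed


theorem lemma4p3:
  fixes \<epsilon> :: real and i :: nat
  assumes "CARD('m::finite) \<ge> 2"
    and "0 < \<epsilon>" and "\<epsilon> < pi" and "i > 0"
  shows "(odd i \<longrightarrow>
           homotopy_equivalence_map
             (subtopology euclidean
                {(x, x, real i * pi + \<epsilon>) | x :: complex^'m^'m. x \<in> CP})
             (subtopology euclidean
                (Zset i \<inter> ((CP \<times> CP \<times> UNIV) - Zset (Suc i))))
             id)
       \<and> (even i \<longrightarrow>
           homotopy_equivalence_map
             (subtopology euclidean
                {(x, y, real i * pi + \<epsilon>) | x y :: complex^'m^'m. x \<in> CP \<and> y \<in> antipodal x})
             (subtopology euclidean
                (Zset i \<inter> ((CP \<times> CP \<times> UNIV) - Zset (Suc i))))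
             id)"
proof (intro conjI impI)
  assume "odd i"
  thus "homotopy_equivalence_map
             (subtopology euclidean
                {(x, x, real i * pi + \<epsilon>) | x :: complex^'m^'m. x \<in> CP})
             (subtopology euclidean
                (Zset i \<inter> ((CP \<times> CP \<times> UNIV) - Zset (Suc i))))
             id" by (rule odd_case[OF assms(1-3)])
next
  assume "even i"
  thus "homotopy_equivalence_map
             (subtopology euclidean
                {(x, y, real i * pi + \<epsilon>) | x y :: complex^'m^'m. x \<in> CP \<and> y \<in> antipodal x})
             (subtopology euclidean
                (Zset i \<inter> ((CP \<times> CP \<times> UNIV) - Zset (Suc i))))
             id" by (rule even_case[OF assms(1-3)])
qed

end
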